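(* Let $\rho\in(0,1)$ and $\sigma_x<\sigma_y$. For every $\mathbf a=(x_1,y_1)\in\mathbb R^2$ with $x_1^2+y_1^2<2x_2^{*2}$, $K(\mathbf a,\mathbf b^* )>0$.
   Context: Standing setup. Fix $\sigma_x,\sigma_y>0$ and $\rho\in(-1,1)$, and let $(\xi,\eta)$ be a bivariate normal random vector with mean $(0,0)$ and covariance matrix $\Sigma=\begin{pmatrix}\sigma_x^2&\rho\sigma_x\sigma_y\\ \rho\sigma_x\sigma_y&\sigma_y^2\end{pmatrix}$. Player I (the minimizer) chooses $\mathbf a=(x_1,y_1)\in\mathbb R^2$ and Player II (the maximizer) chooses $\mathbf b=(x_2,y_2)\in\mathbb R^2$. Let $C_1(\mathbf a,\mathbf b)=\{(x,y):(x_1-x)^2+(y_1-y)^2<(x_2-x)^2+(y_2-y)^2\}$ and $C_2(\mathbf a,\mathbf b)=\{(x,y):(x_1-x)^2+(y_1-y)^2>(x_2-x)^2+(y_2-y)^2\}$. The payoff to Player II (paid by Player I) is $K(\mathbf a,\mathbf b)=x_1+y_1$ if $\mathbf a=\mathbf b$, and $K(\mathbf a,\mathbf b)=(x_1+y_1)\,P((\xi,\eta)\in C_1(\mathbf a,\mathbf b))+(x_2+y_2)\,P((\xi,\eta)\in C_2(\mathbf a,\mathbf b))$ if $\mathbf a\neq\mathbf b$. For $\mathbf a=(x,y)$ write $-\mathbf a=(-x,-y)$. Let $x_2^*=\frac{\sqrt{2\pi(\sigma_x^2+2\rho\sigma_x\sigma_y+\sigma_y^2)}}{4}$, $\mathbf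 b^*=(x_2^*,x_2^* )$ and $\mathbf a^*=(-x_2^*,-x_2^* )$. *)

theory Defs
  imports "HOL-Analysis.Analysis"
begin

text \<open>Density of the centred bivariate normal vector (xi, eta) with standard deviations
  sx, sy and correlation r (points of R^2 are pairs of reals).\<close>
definition binorm_density :: "real \<Rightarrow> real \<Rightarrow> real \<Rightarrow> real \<times> real \<Rightarrow> real" where
  "binorm_density sx sy r p =
     (let x = fst p; y = snd p in
      exp (- (x\<^sup>2 / sx\<^sup>2 - 2 * r * x * y / (sx * sy) + y\<^sup>2 / sy\<^sup>2) / (2 * (1 - r\<^sup>2)))
      / (2 * pi * sx * sy * sqrt (1 - r\<^sup>2)))"

definition binorm :: "real \<Rightarrow> real \<Rightarrow> real \<Rightarrow> (real \<times> real) measure" where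
  "binorm sx sy r = density lborel (\<lambda>p. ennreal (binorm_density sx sy r p))"

definition C1 :: "real \<times> real \<Rightarrow> real \<times> real \<Rightarrow> (real \<times> real) set" where
  "C1 a b = {(x, y). (fst a - x)\<^sup>2 + (snd a - y)\<^sup>2 < (fst b - x)\<^sup>2 + (snd b - y)\<^sup>2}"

definition C2 :: "real \<times> real \<Rightarrow> real \<times> real \<Rightarrow> (real \<times> real) set" where
  "C2 a b = {(x, y). (fst a - x)\<^sup>2 + (snd a - y)\<^sup>2 > (fst b - x)\<^sup>2 + (snd b - y)\<^sup>2}"

definition payoff :: "real \<Rightarrow> real \<Rightarrow> real \<Rightarrow> real \<times> real \<Rightarrow> real \<times> real \<Rightarrow> real" where
  "payoff sx sy r a b =
     (if a = b then fst a + snd a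
      else (fst a + snd a) * measure (binorm sx sy r) (C1 a b)
         + (fst b + snd b) * measure (binorm sx sy r) (C2 a b))"

definition x2star :: "real \<Rightarrow> real \<Rightarrow> real \<Rightarrow> real" where
  "x2star sx sy r = sqrt (2 * pi * (sx\<^sup>2 + 2 * r * sx * sy + sy\<^sup>2)) / 4"

end

theory Submission
  imports Defs "HOL-Probability.Probability"
begin

lemma dens_exp_arg:
  fixes sx sy r d1 d2 x l v :: real
  assumes sx: "sx > 0" and sy: "sy > 0" and r: "r\<^sup>2 < 1" and d2: "d2 \<noteq> 0"
    and v: "v = sx\<^sup>2 * d1\<^sup>2 + 2 * r * sx * sy * d1 * d2 + sy\<^sup>2 * d2\<^sup>2" and vpos: "v > 0"
  shows "(x\<^sup>2 / sx\<^sup>2 - 2 * r * x * ((l - d1 * x) / d2) / (sx * sy) + ((l - d1 * x) / d2)\<^sup>2 / sy\<^sup>2) / (2 * (1 - r\<^sup>2))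
     = l\<^sup>2 / (2 * v) + (x - ((r * sx * sy * d2 + sx\<^sup>2 * d1) / v) * l)\<^sup>2 / (2 * (sx\<^sup>2 * sy\<^sup>2 * (1 - r\<^sup>2) * d2\<^sup>2 / v))"
proof -
  define M where "M = r * sx * sy * d2 + sx\<^sup>2 * d1"
  define W where "W = sy\<^sup>2 * d2\<^sup>2 * x\<^sup>2 - 2 * r * sx * sy * d2 * x * (l - d1 * x) + sx\<^sup>2 * (l - d1 * x)\<^sup>2"
  have P: "v * W = (v * x - M * l)\<^sup>2 + (1 - r\<^sup>2) * sx\<^sup>2 * sy\<^sup>2 * d2\<^sup>2 * l\<^sup>2"
    unfolding v W_def M_def by algebra
  have r1: "1 - r\<^sup>2 > 0" using r by simp
  have L: "(x\<^sup>2 / sx\<^sup>2 - 2 * r * x * ((l - d1 * x) / d2) / (sx * sy) + ((l - d1 * x) / d2)\<^sup>2 / sy\<^sup>2) / (2 * (1 - r\<^sup>2))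
     = W / (sx\<^sup>2 * sy\<^sup>2 * d2\<^sup>2 * (2 * (1 - r\<^sup>2)))"
    unfolding W_def using sx sy d2 r1 by (simp add: field_simps power2_eq_square)
  have R: "l\<^sup>2 / (2 * v) + (x - (M / v) * l)\<^sup>2 / (2 * (sx\<^sup>2 * sy\<^sup>2 * (1 - r\<^sup>2) * d2\<^sup>2 / v))
     = ((v * x - M * l)\<^sup>2 + (1 - r\<^sup>2) * sx\<^sup>2 * sy\<^sup>2 * d2\<^sup>2 * l\<^sup>2) / (v * (sx\<^sup>2 * sy\<^sup>2 * d2\<^sup>2 * (2 * (1 - r\<^sup>2))))"
    using sx sy d2 r1 vpos by (simp add: field_simps power2_eq_square)
  show ?thesis unfolding M_def[symmetric] L R P[symmetric] using vpos by simp
qed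

lemma dens_split:
  fixes sx sy r d1 d2 x l v :: real
  assumes sx: "sx > 0" and sy: "sy > 0" and r: "r\<^sup>2 < 1" and d2: "d2 \<noteq> 0"
    and v: "v = sx\<^sup>2 * d1\<^sup>2 + 2 * r * sx * sy * d1 * d2 + sy\<^sup>2 * d2\<^sup>2" and vpos: "v > 0"
  shows "binorm_density sx sy r (x, (l - d1 * x) / d2) / \<bar>d2\<bar> =
    normal_density 0 (sqrt v) l * normal_density (((r * sx * sy * d2 + sx\<^sup>2 * d1) / v) * l) (sx * sy * sqrt (1 - r\<^sup>2) * \<bar>d2\<bar> / sqrt v) x"
proof -
  define s where "s = sx * sy * sqrt (1 - r\<^sup>2) * \<bar>d2\<bar> / sqrt v"
  have r1: "1 - r\<^sup>2 > 0" using r by simp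
  have spos: "s > 0" unfolding s_def using sx sy r1 d2 vpos by simp
  have s2: "s\<^sup>2 = sx\<^sup>2 * sy\<^sup>2 * (1 - r\<^sup>2) * d2\<^sup>2 / v"
    unfolding s_def using r1 vpos by (simp add: power_mult_distrib power_divide)
  have E: "exp (- (x\<^sup>2 / sx\<^sup>2 - 2 * r * x * ((l - d1 * x) / d2) / (sx * sy) + ((l - d1 * x) / d2)\<^sup>2 / sy\<^sup>2) / (2 * (1 - r\<^sup>2)))
     = exp (- l\<^sup>2 / (2 * v)) * exp (- (x - ((r * sx * sy * d2 + sx\<^sup>2 * d1) / v) * l)\<^sup>2 / (2 * s\<^sup>2))"
  proof -
    have eq: "(x\<^sup>2 / sx\<^sup>2 - 2 * r * x * ((l - d1 * x) / d2) / (sx * sy) + ((l - d1 * x) / d2)\<^sup>2 / sy\<^sup>2) / (2 * (1 - r\<^sup>2))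
      = l\<^sup>2 / (2 * v) + (x - ((r * sx * sy * d2 + sx\<^sup>2 * d1) / v) * l)\<^sup>2 / (2 * s\<^sup>2)"
      unfolding s2 by (rule dens_exp_arg[OF sx sy r d2 v vpos])
    have "- (x\<^sup>2 / sx\<^sup>2 - 2 * r * x * ((l - d1 * x) / d2) / (sx * sy) + ((l - d1 * x) / d2)\<^sup>2 / sy\<^sup>2) / (2 * (1 - r\<^sup>2))
      = - l\<^sup>2 / (2 * v) + - (x - ((r * sx * sy * d2 + sx\<^sup>2 * d1) / v) * l)\<^sup>2 / (2 * s\<^sup>2)"
      using eq by (metis minus_add_distrib minus_divide_left)
    then show ?thesis by (simp only: exp_add)
  qed
  have C: "1 / (2 * pi * sx * sy * sqrt (1 - r\<^sup>2)) / \<bar>d2\<bar> = 1 / sqrt (2 * pi * v) * (1 / sqrt (2 * pi * s\<^sup>2))"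
  proof -
    have "sqrt (2 * pi * s\<^sup>2) = sqrt (2 * pi) * s" using spos by (simp add: real_sqrt_mult)
    moreover have "sqrt (2 * pi * v) = sqrt (2 * pi) * sqrt v" by (simp add: real_sqrt_mult)
    moreover have "sqrt (2 * pi) * sqrt (2 * pi) = 2 * pi" by simp
    moreover have vs: "sqrt v * s = sx * sy * sqrt (1 - r\<^sup>2) * \<bar>d2\<bar>"
      unfolding s_def using vpos by simp
    ultimately have "1 / sqrt (2 * pi * v) * (1 / sqrt (2 * pi * s\<^sup>2)) = 1 / ((sqrt (2 * pi) * sqrt (2 * pi)) * (sqrt v * s))"
      by (metis (no_types, lifting) divide_divide_eq_left mult.assoc mult.left_commute times_divide_eq_left mult_1)
    also have "\<dots> = 1 / (2 * pi * sx * sy * sqrt (1 - r\<^sup>2)) / \<bar>d2\<bar>"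
      unfolding vs by simp
    finally show ?thesis by simp
  qed
  show ?thesis
    unfolding binorm_density_def normal_density_def Let_def fst_conv snd_conv s_def[symmetric]
    using vpos
    apply (simp only: E)
    apply (subst real_sqrt_pow2, simp)
    using C by (simp add: field_simps)
qed

lemma binorm_density_measurable[measurable]: "binorm_density sx sy r \<in> borel_measurable borel"
  unfolding binorm_density_def Let_def borel_prod[symmetric] by measurable

lemma binorm_density_nonneg: "sx > 0 \<Longrightarrow> sy > 0 \<Longrightarrow> r\<^sup>2 < 1 \<Longrightarrow> binorm_density sx sy r p \<ge> 0"
  unfolding binorm_density_def Let_def by simp

lemma proj_distr:
  fixes sx sy r d1 d2 v :: real
  assumes sx: "sx > 0" and sy: "sy > 0" and r: "r\<^sup>2 < 1" and d2: "d2 \<noteq> 0"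
    and v: "v = sx\<^sup>2 * d1\<^sup>2 + 2 * r * sx * sy * d1 * d2 + sy\<^sup>2 * d2\<^sup>2" and vpos: "v > 0"
  shows "distr (binorm sx sy r) lborel (\<lambda>p. d1 * fst p + d2 * snd p)
       = density lborel (\<lambda>l. ennreal (normal_density 0 (sqrt v) l))"
proof (rule measure_eqI)
  show "sets (distr (binorm sx sy r) lborel (\<lambda>p. d1 * fst p + d2 * snd p)) =
        sets (density lborel (\<lambda>l. ennreal (normal_density 0 (sqrt v) l)))" by simp
next
  fix A assume "A \<in> sets (distr (binorm sx sy r) lborel (\<lambda>p. d1 * fst p + d2 * snd p))"
  then have A[measurable]: "A \<in> sets borel" by simp
  define f where "f = binorm_density sx sy r"
  define M where "M = (\<lambda>l. (r * sx * sy * d2 + sx\<^sup>2 * d1) / v * l)"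
  define s where "s = sx * sy * sqrt (1 - r\<^sup>2) * \<bar>d2\<bar> / sqrt v"
  have [measurable]: "f \<in> borel_measurable borel" unfolding f_def by measurable
  have [measurable]: "f \<in> borel_measurable (lborel \<Otimes>\<^sub>M lborel)" by (simp only: lborel_prod) simp
  have spos: "s > 0" unfolding s_def using sx sy r d2 vpos by simp
  have fnn: "\<And>p. f p \<ge> 0" unfolding f_def using binorm_density_nonneg[OF sx sy r] by simp
  have meas: "(\<lambda>p. d1 * fst p + d2 * snd p) \<in> measurable (binorm sx sy r) lborel"
    unfolding binorm_def by (simp add: borel_prod[symmetric])
  have "emeasure (distr (binorm sx sy r) lborel (\<lambda>p. d1 * fst p + d2 * snd p)) A
      = emeasure (binorm sx sy r) ((\<lambda>p. d1 * fst p + d2 * snd p) -` A \<inter> space (binorm sx sy r))"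
    by (rule emeasure_distr[OF meas]) simp
  also have "\<dots> = (\<integral>\<^sup>+p. ennreal (f p) * indicator A (d1 * fst p + d2 * snd p) \<partial>lborel)"
    unfolding binorm_def f_def
  proof (subst emeasure_density)
    show "(\<lambda>p. d1 * fst p + d2 * snd p) -` A \<inter> space (density lborel (\<lambda>p. ennreal (binorm_density sx sy r p))) \<in> sets lborel"
      using measurable_sets[OF meas, of A] A unfolding binorm_def by simp
  qed (auto intro!: nn_integral_cong simp: indicator_def)
  also have "\<dots> = (\<integral>\<^sup>+p. ennreal (f p) * indicator A (d1 * fst p + d2 * snd p) \<partial>(lborel \<Otimes>\<^sub>M lborel))"
    by (simp only: lborel_prod)
  also have "\<dots> = (\<integral>\<^sup>+x. \<integral>\<^sup>+y. ennreal (f (x, y)) * indicator A (d1 * x + d2 * y) \<partial>lborel \<partial>lborel)"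
    by (subst lborel.nn_integral_fst[symmetric]) (simp_all)
  also have "\<dots> = (\<integral>\<^sup>+x. \<integral>\<^sup>+z. ennreal (normal_density 0 (sqrt v) z * normal_density (M z) s x) * indicator A z \<partial>lborel \<partial>lborel)"
  proof (rule nn_integral_cong)
    fix x :: real
    have "(\<integral>\<^sup>+y. ennreal (f (x, y)) * indicator A (d1 * x + d2 * y) \<partial>lborel)
        = ennreal \<bar>1 / d2\<bar> * (\<integral>\<^sup>+z. ennreal (f (x, - d1 * x / d2 + 1 / d2 * z)) * indicator A (d1 * x + d2 * (- d1 * x / d2 + 1 / d2 * z)) \<partial>lborel)"
      using d2 by (subst nn_integral_real_affine[where c="1/d2" and t="- d1 * x / d2"]) auto
    also have "\<dots> = (\<integral>\<^sup>+z. ennreal (f (x, (z - d1 * x) / d2) / \<bar>d2\<bar>) * indicator A z \<partial>lborel)"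
      using d2 fnn
      by (subst nn_integral_cmult[symmetric]) (auto intro!: nn_integral_cong simp: ennreal_mult'[symmetric] field_simps)
    also have "\<dots> = (\<integral>\<^sup>+z. ennreal (normal_density 0 (sqrt v) z * normal_density (M z) s x) * indicator A z \<partial>lborel)"
      unfolding f_def M_def s_def by (simp only: dens_split[OF sx sy r d2 v vpos])
    finally show "(\<integral>\<^sup>+y. ennreal (f (x, y)) * indicator A (d1 * x + d2 * y) \<partial>lborel) = \<dots>" .
  qed
  also have "\<dots> = (\<integral>\<^sup>+z. \<integral>\<^sup>+x. ennreal (normal_density 0 (sqrt v) z * normal_density (M z) s x) * indicator A z \<partial>lborel \<partial>lborel)"
    unfolding M_def by (rule lborel_pair.Fubini'[symmetric])
       (simp only: lborel_prod measurable_lborel2 borel_prod[symmetric] normal_density_def split_beta', measurable)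
  also have "\<dots> = (\<integral>\<^sup>+z. ennreal (normal_density 0 (sqrt v) z) * indicator A z \<partial>lborel)"
  proof (rule nn_integral_cong)
    fix z :: real
    have "(\<integral>\<^sup>+x. ennreal (normal_density (M z) s x) \<partial>lborel) = 1"
      using spos by (subst nn_integral_eq_integral) auto
    then show "(\<integral>\<^sup>+x. ennreal (normal_density 0 (sqrt v) z * normal_density (M z) s x) * indicator A z \<partial>lborel)
       = ennreal (normal_density 0 (sqrt v) z) * indicator A z"
      by (subst nn_integral_multc, simp, subst ennreal_mult', simp, subst nn_integral_cmult) (auto simp: ac_simps)
  qed
  also have "\<dots> = emeasure (density lborel (\<lambda>l. ennreal (normal_density 0 (sqrt v) l))) A"
    by (subst emeasure_density) auto
  finally show "emeasure (distr (binorm sx sy r) lborel (\<lambda>p. d1 * fst p + d2 * snd p)) A =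
         emeasure (density lborel (\<lambda>l. ennreal (normal_density 0 (sqrt v) l))) A" .
qed
lemma proj_distr':
  fixes sx sy r d1 d2 v :: real
  assumes sx: "sx > 0" and sy: "sy > 0" and r: "r\<^sup>2 < 1" and d1: "d1 \<noteq> 0"
    and v: "v = sx\<^sup>2 * d1\<^sup>2 + 2 * r * sx * sy * d1 * d2 + sy\<^sup>2 * d2\<^sup>2" and vpos: "v > 0"
  shows "distr (binorm sx sy r) lborel (\<lambda>p. d1 * fst p + d2 * snd p)
       = density lborel (\<lambda>l. ennreal (normal_density 0 (sqrt v) l))"
proof (rule measure_eqI)
  show "sets (distr (binorm sx sy r) lborel (\<lambda>p. d1 * fst p + d2 * snd p)) =
        sets (density lborel (\<lambda>l. ennreal (normal_density 0 (sqrt v) l)))" by simp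
next
  fix A assume "A \<in> sets (distr (binorm sx sy r) lborel (\<lambda>p. d1 * fst p + d2 * snd p))"
  then have A[measurable]: "A \<in> sets borel" by simp
  define f where "f = binorm_density sx sy r"
  define M where "M = (\<lambda>l. (r * sy * sx * d1 + sy\<^sup>2 * d2) / v * l)"
  define s where "s = sy * sx * sqrt (1 - r\<^sup>2) * \<bar>d1\<bar> / sqrt v"
  have [measurable]: "f \<in> borel_measurable borel" unfolding f_def by measurable
  have [measurable]: "f \<in> borel_measurable (lborel \<Otimes>\<^sub>M lborel)" by (simp only: lborel_prod) simp
  have spos: "s > 0" unfolding s_def using sx sy r d1 vpos by simp
  have fnn: "\<And>p. f p \<ge> 0" unfolding f_def using binorm_density_nonneg[OF sx sy r] by simp
  have meas: "(\<lambda>p. d1 * fst p + d2 * snd p) \<in> measurable (binorm sx sy r) lborel"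
    unfolding binorm_def by (simp add: borel_prod[symmetric])
  have "emeasure (distr (binorm sx sy r) lborel (\<lambda>p. d1 * fst p + d2 * snd p)) A
      = emeasure (binorm sx sy r) ((\<lambda>p. d1 * fst p + d2 * snd p) -` A \<inter> space (binorm sx sy r))"
    by (rule emeasure_distr[OF meas]) simp
  also have "\<dots> = (\<integral>\<^sup>+p. ennreal (f p) * indicator A (d1 * fst p + d2 * snd p) \<partial>lborel)"
    unfolding binorm_def f_def
  proof (subst emeasure_density)
    show "(\<lambda>p. d1 * fst p + d2 * snd p) -` A \<inter> space (density lborel (\<lambda>p. ennreal (binorm_density sx sy r p))) \<in> sets lborel"
      using measurable_sets[OF meas, of A] A unfolding binorm_def by simp
  qed (auto intro!: nn_integral_cong simp: indicator_def)
  also have "\<dots> = (\<integral>\<^sup>+p. ennreal (f p) * indicator A (d1 * fst p + d2 * snd p) \<partial>(lborel \<Otimes>\<^sub>M lborel))"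
    by (simp only: lborel_prod)
  also have "\<dots> = (\<integral>\<^sup>+y. \<integral>\<^sup>+x. ennreal (f (x, y)) * indicator A (d1 * x + d2 * y) \<partial>lborel \<partial>lborel)"
    by (subst lborel_pair.nn_integral_snd[symmetric]) (simp_all)
  also have "\<dots> = (\<integral>\<^sup>+y. \<integral>\<^sup>+z. ennreal (normal_density 0 (sqrt v) z * normal_density (M z) s y) * indicator A z \<partial>lborel \<partial>lborel)"
  proof (rule nn_integral_cong)
    fix y :: real
    have v': "v = sy\<^sup>2 * d2\<^sup>2 + 2 * r * sy * sx * d2 * d1 + sx\<^sup>2 * d1\<^sup>2" unfolding v by simp
    have "(\<integral>\<^sup>+x. ennreal (f (x, y)) * indicator A (d1 * x + d2 * y) \<partial>lborel)
        = ennreal \<bar>1 / d1\<bar> * (\<integral>\<^sup>+z. ennreal (f (- d2 * y / d1 + 1 / d1 * z, y)) * indicator A (d1 * (- d2 * y / d1 + 1 / d1 * z) + d2 * y) \<partial>lborel)"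
      using d1 by (subst nn_integral_real_affine[where c="1/d1" and t="- d2 * y / d1"]) auto
    also have "\<dots> = (\<integral>\<^sup>+z. ennreal (binorm_density sy sx r (y, (z - d2 * y) / d1) / \<bar>d1\<bar>) * indicator A z \<partial>lborel)"
      using d1 fnn
      by (subst nn_integral_cmult[symmetric]) (auto intro!: nn_integral_cong simp: ennreal_mult'[symmetric] field_simps f_def binorm_density_def Let_def)
    also have "\<dots> = (\<integral>\<^sup>+z. ennreal (normal_density 0 (sqrt v) z * normal_density (M z) s y) * indicator A z \<partial>lborel)"
      unfolding M_def s_def by (simp only: dens_split[OF sy sx r d1 v' vpos])
    finally show "(\<integral>\<^sup>+x. ennreal (f (x, y)) * indicator A (d1 * x + d2 * y) \<partial>lborel) = \<dots>" .
  qed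
  also have "\<dots> = (\<integral>\<^sup>+z. \<integral>\<^sup>+y. ennreal (normal_density 0 (sqrt v) z * normal_density (M z) s y) * indicator A z \<partial>lborel \<partial>lborel)"
    unfolding M_def by (rule lborel_pair.Fubini'[symmetric])
       (simp only: lborel_prod measurable_lborel2 borel_prod[symmetric] normal_density_def split_beta', measurable)
  also have "\<dots> = (\<integral>\<^sup>+z. ennreal (normal_density 0 (sqrt v) z) * indicator A z \<partial>lborel)"
  proof (rule nn_integral_cong)
    fix z :: real
    have "(\<integral>\<^sup>+x. ennreal (normal_density (M z) s x) \<partial>lborel) = 1"
      using spos by (subst nn_integral_eq_integral) auto
    then show "(\<integral>\<^sup>+x. ennreal (normal_density 0 (sqrt v) z * normal_density (M z) s x) * indicator A z \<partial>lborel)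
       = ennreal (normal_density 0 (sqrt v) z) * indicator A z"
      by (subst nn_integral_multc, simp, subst ennreal_mult', simp, subst nn_integral_cmult) (auto simp: ac_simps)
  qed
  also have "\<dots> = emeasure (density lborel (\<lambda>l. ennreal (normal_density 0 (sqrt v) l))) A"
    by (subst emeasure_density) auto
  finally show "emeasure (distr (binorm sx sy r) lborel (\<lambda>p. d1 * fst p + d2 * snd p)) A =
         emeasure (density lborel (\<lambda>l. ennreal (normal_density 0 (sqrt v) l))) A" .
qed
lemma normal_facts:
  fixes \<sigma> t :: real
  assumes sp: "\<sigma> > 0"
  defines "N \<equiv> density lborel (\<lambda>l. ennreal (normal_density 0 \<sigma> l))"
  shows "measure N {..<t} + measure N {t<..} = 1"
    and "measure N {t<..} > 0"
    and "t \<ge> 0 \<Longrightarrow> measure N {t<..} \<ge> 1/2 - t / (sqrt (2 * pi) * \<sigma>)"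
proof -
  interpret N: prob_space N unfolding N_def using prob_space_normal_density[OF sp] .
  have spN[simp]: "space N = UNIV" unfolding N_def by simp
  have sN[simp]: "sets N = sets borel" unfolding N_def by simp
  have emN: "\<And>A. A \<in> sets borel \<Longrightarrow> emeasure N A = (\<integral>\<^sup>+x. ennreal (normal_density 0 \<sigma> x) * indicator A x \<partial>lborel)"
    unfolding N_def by (subst emeasure_density) auto
  have single: "\<And>a. measure N {a} = 0"
  proof -
    fix a :: real
    have "emeasure N {a} = (\<integral>\<^sup>+x. ennreal (normal_density 0 \<sigma> x) * indicator {a} x \<partial>lborel)" by (rule emN) simp
    also have "\<dots> = 0"
      by (subst nn_integral_indicator_singleton) auto
    finally show "measure N {a} = 0" by (simp add: N.emeasure_eq_measure)
  qed
  have sum1: "\<And>t. measure N {..<t} + measure N {t<..} = 1"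
  proof -
    fix t :: real
    have "measure N {..<t} + measure N {t<..} = measure N ({..<t} \<union> {t<..})"
      by (rule N.finite_measure_Union[symmetric]) auto
    also have "{..<t} \<union> {t<..} = UNIV - {t}" by auto
    also have "measure N (UNIV - {t}) = 1"
      using N.prob_compl[of "{t}"] single[of t] by (simp add: N.prob_space)
    finally show "measure N {..<t} + measure N {t<..} = 1" .
  qed
  then show "measure N {..<t} + measure N {t<..} = 1" .
  have sym: "measure N {..<0} = measure N {0<..}"
  proof -
    have "emeasure N {..<0} = (\<integral>\<^sup>+x. ennreal (normal_density 0 \<sigma> x) * indicator {..<0} x \<partial>lborel)" by (rule emN) simp
    also have "\<dots> = ennreal \<bar>-1\<bar> * (\<integral>\<^sup>+x. ennreal (normal_density 0 \<sigma> (0 + -1 * x)) * indicator {..<0} (0 + -1 * x) \<partial>lborel)"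
      by (rule nn_integral_real_affine) auto
    also have "\<dots> = (\<integral>\<^sup>+x. ennreal (normal_density 0 \<sigma> x) * indicator {0<..} x \<partial>lborel)"
      by (auto intro!: nn_integral_cong simp: normal_density_def indicator_def)
    also have "\<dots> = emeasure N {0<..}" by (rule emN[symmetric]) simp
    finally show ?thesis by (simp add: N.emeasure_eq_measure)
  qed
  have half: "measure N {0<..} = 1/2" using sum1[of 0] sym by simp
  show "measure N {t<..} > 0"
  proof (rule ccontr)
    assume "\<not> measure N {t<..} > 0"
    then have "emeasure N {t<..} = 0" using measure_nonneg[of N "{t<..}"] by (simp add: N.emeasure_eq_measure)
    then have "(\<integral>\<^sup>+x. ennreal (normal_density 0 \<sigma> x) * indicator {t<..} x \<partial>lborel) = 0"
      using emN[of "{t<..}"] by simp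
    then have "AE x in lborel. ennreal (normal_density 0 \<sigma> x) * indicator {t<..} x = 0"
      by (subst (asm) nn_integral_0_iff_AE) auto
    then have "AE x in lborel. x \<notin> {t<..t+1}"
    proof (rule eventually_mono)
      fix x assume h: "ennreal (normal_density 0 \<sigma> x) * indicator {t<..} x = 0"
      show "x \<notin> {t<..t+1}"
      proof
        assume "x \<in> {t<..t+1}"
        then have "ennreal (normal_density 0 \<sigma> x) = 0" using h by (simp add: indicator_def)
        then show False using normal_density_pos[OF sp, of 0 x] by simp
      qed
    qed
    then have "emeasure lborel {t<..t+1} = 0"
      by (subst (asm) AE_iff_measurable[of "{t<..t+1}"]) auto
    then show False by simp
  qed
  assume t0: "t \<ge> 0"
  have bnd: "measure N {0<..t} \<le> t / (sqrt (2 * pi) * \<sigma>)"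
  proof -
    have c: "\<And>x. normal_density 0 \<sigma> x \<le> 1 / (sqrt (2 * pi) * \<sigma>)"
      using sp by (auto simp: normal_density_def real_sqrt_mult divide_le_eq)
    have "emeasure N {0<..t} = (\<integral>\<^sup>+x. ennreal (normal_density 0 \<sigma> x) * indicator {0<..t} x \<partial>lborel)" by (rule emN) simp
    also have "\<dots> \<le> (\<integral>\<^sup>+x. ennreal (1 / (sqrt (2 * pi) * \<sigma>)) * indicator {0<..t} x \<partial>lborel)"
      by (intro nn_integral_mono) (auto simp: indicator_def c intro!: ennreal_leI)
    also have "\<dots> = ennreal (1 / (sqrt (2 * pi) * \<sigma>)) * ennreal t"
      using t0 by (subst nn_integral_cmult_indicator) auto
    also have "\<dots> = ennreal (t / (sqrt (2 * pi) * \<sigma>))"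
      using sp t0 by (simp add: ennreal_mult'[symmetric])
    finally show ?thesis using sp t0 by (simp add: N.emeasure_eq_measure)
  qed
  have "measure N {0<..} = measure N {0<..t} + measure N {t<..}"
  proof -
    have "{0<..} = {0<..t} \<union> {t<..}" using t0 by auto
    moreover have "measure N ({0<..t} \<union> {t<..}) = measure N {0<..t} + measure N {t<..}"
      by (rule N.finite_measure_Union) auto
    ultimately show ?thesis by simp
  qed
  then show "measure N {t<..} \<ge> 1/2 - t / (sqrt (2 * pi) * \<sigma>)" using half bnd by simp
qed
lemma final_ineq:
  fixes c x y :: real
  assumes c: "c > 0" and s: "x + y < 0" and n: "x\<^sup>2 + y\<^sup>2 < 2 * c\<^sup>2" and xy: "y \<le> x"
  shows "4 * c * (c - x) * (2 * c + (x + y)) > (2 * c - (x + y)) * (2 * c\<^sup>2 - x\<^sup>2 - y\<^sup>2)"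
proof -
  define u where "u = x + y"
  define w where "w = x - y"
  define A where "A = 2 * c + u"
  define B where "B = 2 * c - u"
  have "(x + y)\<^sup>2 \<le> 2 * (x\<^sup>2 + y\<^sup>2)" using sum_squares_ge_zero[of "x - y" 0]
    by (simp add: power2_eq_square algebra_simps)
  then have "u\<^sup>2 < (2 * c)\<^sup>2" using n unfolding u_def by (simp add: power2_eq_square)
  then have "\<bar>u\<bar> < 2 * c" using c power2_less_imp_less[of "\<bar>u\<bar>" "2*c"] by simp
  then have Apos: "A > 0" unfolding A_def by simp
  have Bgt: "B > 2 * c" unfolding B_def u_def using s by simp
  have id1: "2 * (4 * c * (c - x) * (2 * c + (x + y)) - (2 * c - (x + y)) * (2 * c\<^sup>2 - x\<^sup>2 - y\<^sup>2))
     = A\<^sup>2 * B - 4 * c * A * w + B * w\<^sup>2"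
    unfolding A_def B_def u_def w_def by (simp add: power2_eq_square algebra_simps)
  have id2: "B * (A\<^sup>2 * B - 4 * c * A * w + B * w\<^sup>2) = (B * w - 2 * c * A)\<^sup>2 + A\<^sup>2 * (B\<^sup>2 - 4 * c\<^sup>2)"
    by (simp add: power2_eq_square algebra_simps)
  have "B\<^sup>2 - 4 * c\<^sup>2 > 0" using Bgt c using mult_strict_mono[of "2*c" B "2*c" B] by (simp add: power2_eq_square)
  then have "A\<^sup>2 * (B\<^sup>2 - 4 * c\<^sup>2) > 0" using Apos by simp
  then have "B * (A\<^sup>2 * B - 4 * c * A * w + B * w\<^sup>2) > 0" unfolding id2 by (simp add: add_nonneg_pos)
  then have "A\<^sup>2 * B - 4 * c * A * w + B * w\<^sup>2 > 0" using Bgt c by (simp add: zero_less_mult_iff)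
  then show ?thesis using id1 by simp
qed

lemma sqrt_bound:
  fixes sx sy r d1 d2 m :: real
  assumes "sx > 0" "sy > 0" "r > 0" "m > 0" "m \<le> d1" "m \<le> d2"
  shows "m\<^sup>2 * (sx\<^sup>2 + 2 * r * sx * sy + sy\<^sup>2) \<le> sx\<^sup>2 * d1\<^sup>2 + 2 * r * sx * sy * d1 * d2 + sy\<^sup>2 * d2\<^sup>2"
proof -
  have "m\<^sup>2 \<le> d1\<^sup>2" "m\<^sup>2 \<le> d2\<^sup>2" "m\<^sup>2 \<le> d1 * d2"
    using assms power_mono[of m d1 2] power_mono[of m d2 2] mult_mono[of m d1 m d2]
    by (auto simp: power2_eq_square)
  moreover have "2 * r * sx * sy > 0" using assms by simp
  ultimately have "0 \<le> sx\<^sup>2 * (d1\<^sup>2 - m\<^sup>2) + (2 * r * sx * sy) * (d1 * d2 - m\<^sup>2) + sy\<^sup>2 * (d2\<^sup>2 - m\<^sup>2)"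
    using assms by (intro add_nonneg_nonneg mult_nonneg_nonneg) auto
  then show ?thesis by (simp add: algebra_simps)
qed

theorem mainTheorem16:
  fixes sx sy r x1 y1 :: real
  assumes "sx > 0" and "sy > 0" and "0 < r" and "r < 1" and "sx < sy"
    and "x1\<^sup>2 + y1\<^sup>2 < 2 * (x2star sx sy r)\<^sup>2"
  shows "payoff sx sy r (x1, y1) (x2star sx sy r, x2star sx sy r) > 0"
proof -
  note sx = assms(1) and sy = assms(2) and r0 = assms(3) and r1 = assms(4)
  define c where "c = x2star sx sy r"
  define S where "S = sx\<^sup>2 + 2 * r * sx * sy + sy\<^sup>2"
  have Spos: "S > 0" unfolding S_def using sx sy r0 by (simp add: add_pos_pos)
  have cS: "c = sqrt (2 * pi * S) / 4" unfolding c_def x2star_def S_def by simp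
  have cpos: "c > 0" unfolding cS using Spos by simp
  have hn: "x1\<^sup>2 + y1\<^sup>2 < 2 * c\<^sup>2" using assms(6) unfolding c_def .
  have r2: "r\<^sup>2 < 1" using r0 r1 mult_strict_mono[of r 1 r 1] by (simp add: power2_eq_square)
  define d1 where "d1 = c - x1"
  define d2 where "d2 = c - y1"
  define t where "t = (2 * c\<^sup>2 - x1\<^sup>2 - y1\<^sup>2) / 2"
  define v where "v = sx\<^sup>2 * d1\<^sup>2 + 2 * r * sx * sy * d1 * d2 + sy\<^sup>2 * d2\<^sup>2"
  define L where "L = (\<lambda>p::real\<times>real. d1 * fst p + d2 * snd p)"
  define N where "N = density lborel (\<lambda>l. ennreal (normal_density 0 (sqrt v) l))"
  have neq: "(x1, y1) \<noteq> (c, c)" using hn by (auto simp: power2_eq_square)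
  have dnz: "d1 \<noteq> 0 \<or> d2 \<noteq> 0" using neq unfolding d1_def d2_def by auto
  have v1: "v = (sx * d1 + r * sy * d2)\<^sup>2 + (1 - r\<^sup>2) * sy\<^sup>2 * d2\<^sup>2"
    unfolding v_def by (simp add: power2_eq_square algebra_simps)
  have v2: "v = (sy * d2 + r * sx * d1)\<^sup>2 + (1 - r\<^sup>2) * sx\<^sup>2 * d1\<^sup>2"
    unfolding v_def by (simp add: power2_eq_square algebra_simps)
  have vpos: "v > 0"
  proof (cases "d2 = 0")
    case True
    then have "d1 \<noteq> 0" using dnz by simp
    then have "(1 - r\<^sup>2) * sx\<^sup>2 * d1\<^sup>2 > 0" using r2 sx by simp
    then show ?thesis unfolding v2 by (simp add: add_nonneg_pos)
  next
    case False
    then have "(1 - r\<^sup>2) * sy\<^sup>2 * d2\<^sup>2 > 0" using r2 sy by simp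
    then show ?thesis unfolding v1 by (simp add: add_nonneg_pos)
  qed
  have D: "distr (binorm sx sy r) lborel L = N"
  proof (cases "d2 = 0")
    case True
    then have "d1 \<noteq> 0" using dnz by simp
    then show ?thesis unfolding L_def N_def using proj_distr'[OF sx sy r2 _ v_def vpos] by simp
  next
    case False
    then show ?thesis unfolding L_def N_def using proj_distr[OF sx sy r2 _ v_def vpos] by simp
  qed
  have Lm: "L \<in> measurable (binorm sx sy r) lborel"
    unfolding binorm_def L_def by (simp add: borel_prod[symmetric])
  have spB: "space (binorm sx sy r) = UNIV" unfolding binorm_def by simp
  have C1eq: "C1 (x1, y1) (c, c) = L -` {..<t}"
  proof -
    have "\<And>x y. ((x1 - x)\<^sup>2 + (y1 - y)\<^sup>2 < (c - x)\<^sup>2 + (c - y)\<^sup>2) \<longleftrightarrow> d1 * x + d2 * y < t"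
      unfolding d1_def d2_def t_def by (auto simp: power2_eq_square field_simps)
    then show ?thesis unfolding C1_def L_def by auto
  qed
  have C2eq: "C2 (x1, y1) (c, c) = L -` {t<..}"
  proof -
    have "\<And>x y. ((x1 - x)\<^sup>2 + (y1 - y)\<^sup>2 > (c - x)\<^sup>2 + (c - y)\<^sup>2) \<longleftrightarrow> d1 * x + d2 * y > t"
      unfolding d1_def d2_def t_def by (auto simp: power2_eq_square field_simps)
    then show ?thesis unfolding C2_def L_def by auto
  qed
  have P1: "measure (binorm sx sy r) (C1 (x1, y1) (c, c)) = measure N {..<t}"
    unfolding D[symmetric] C1eq using Lm spB by (subst measure_distr) auto
  have P2: "measure (binorm sx sy r) (C2 (x1, y1) (c, c)) = measure N {t<..}"
    unfolding D[symmetric] C2eq using Lm spB by (subst measure_distr) auto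
  have sv: "sqrt v > 0" using vpos by simp
  note NF = normal_facts[OF sv, of t, folded N_def]
  have pay: "payoff sx sy r (x1, y1) (c, c) = (x1 + y1) * measure N {..<t} + (2 * c) * measure N {t<..}"
    unfolding payoff_def using neq P1 P2 by (simp only: if_False fst_conv snd_conv) simp
  show ?thesis
  proof (cases "x1 + y1 \<ge> 0")
    case True
    have "(x1 + y1) * measure N {..<t} \<ge> 0" using True by simp
    moreover have "(2 * c) * measure N {t<..} > 0" using cpos NF(2) by simp
    ultimately show ?thesis unfolding c_def[symmetric] pay by simp
  next
    case False
    then have s: "x1 + y1 < 0" by simp
    have x1c: "x1 < c"
    proof (rule ccontr)
      assume "\<not> x1 < c"
      then have "c \<le> x1" "y1 < - c" using s by auto
      then have "c\<^sup>2 \<le> x1\<^sup>2" "c\<^sup>2 < y1\<^sup>2"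
        using cpos power_mono[of c x1 2] power_strict_mono[of c "-y1" 2] by auto
      then show False using hn by simp
    qed
    have y1c: "y1 < c"
    proof (rule ccontr)
      assume "\<not> y1 < c"
      then have "c \<le> y1" "x1 < - c" using s by auto
      then have "c\<^sup>2 \<le> y1\<^sup>2" "c\<^sup>2 < x1\<^sup>2"
        using cpos power_mono[of c y1 2] power_strict_mono[of c "-x1" 2] by auto
      then show False using hn by simp
    qed
    define m where "m = min d1 d2"
    have mpos: "m > 0" unfolding m_def d1_def d2_def using x1c y1c by simp
    have tpos: "t \<ge> 0" unfolding t_def using hn by simp
    have "m\<^sup>2 * S \<le> v" unfolding S_def v_def
      by (rule sqrt_bound[OF sx sy r0 mpos]) (auto simp: m_def)
    then have h1: "sqrt (2 * pi * (m\<^sup>2 * S)) \<le> sqrt (2 * pi * v)" by simp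
    have h2: "sqrt (2 * pi * (m\<^sup>2 * S)) = m * (4 * c)"
      unfolding cS using mpos by (simp add: real_sqrt_mult)
    have h3: "sqrt (2 * pi * v) = sqrt (2 * pi) * sqrt v" by (simp add: real_sqrt_mult)
    have "m * (4 * c) \<le> sqrt (2 * pi) * sqrt v" using h1 unfolding h2 h3 .
    then have den: "4 * c * m \<le> sqrt (2 * pi) * sqrt v" by (simp add: mult.commute mult.left_commute)
    have "t / (sqrt (2 * pi) * sqrt v) \<le> t / (4 * c * m)"
      using den tpos cpos mpos vpos by (intro divide_left_mono) auto
    then have P2b: "measure N {t<..} \<ge> 1/2 - t / (4 * c * m)" using NF(3)[OF tpos] by simp
    have key: "2 * c * m * (2 * c + (x1 + y1)) > (2 * c - (x1 + y1)) * t"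
    proof -
      have "4 * c * m * (2 * c + (x1 + y1)) > (2 * c - (x1 + y1)) * (2 * c\<^sup>2 - x1\<^sup>2 - y1\<^sup>2)"
      proof (cases "y1 \<le> x1")
        case True
        then have "m = c - x1" unfolding m_def d1_def d2_def by simp
        then show ?thesis using final_ineq[OF cpos s hn True] by simp
      next
        case False
        then have mm: "m = c - y1" unfolding m_def d1_def d2_def by simp
        have "y1 + x1 < 0" "y1\<^sup>2 + x1\<^sup>2 < 2 * c\<^sup>2" "x1 \<le> y1" using s hn False by auto
        from final_ineq[OF cpos this]
        have "4 * c * (c - y1) * (2 * c + (x1 + y1)) > (2 * c - (x1 + y1)) * (2 * c\<^sup>2 - x1\<^sup>2 - y1\<^sup>2)"
          by (simp add: add.commute diff_diff_eq)
        then show ?thesis unfolding mm .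
      qed
      moreover have "2 * c * m * (2 * c + (x1 + y1)) = (4 * c * m * (2 * c + (x1 + y1))) / 2" by simp
      moreover have "(2 * c - (x1 + y1)) * t = ((2 * c - (x1 + y1)) * (2 * c\<^sup>2 - x1\<^sup>2 - y1\<^sup>2)) / 2"
        unfolding t_def by simp
      ultimately show ?thesis by linarith
    qed
    have P1e: "measure N {..<t} = 1 - measure N {t<..}" using NF(1) by simp
    have e0: "(x1 + y1) * measure N {..<t} + (2 * c) * measure N {t<..}
        = (x1 + y1) + (2 * c - (x1 + y1)) * measure N {t<..}" unfolding P1e by (simp add: algebra_simps)
    have i1: "(x1 + y1) + (2 * c - (x1 + y1)) * (1/2 - t / (4 * c * m)) \<le> (x1 + y1) + (2 * c - (x1 + y1)) * measure N {t<..}"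
      using P2b s cpos by (intro add_left_mono mult_left_mono) auto
    have e1: "(x1 + y1) + (2 * c - (x1 + y1)) * (1/2 - t / (4 * c * m))
        = (2 * c * m * (2 * c + (x1 + y1)) - (2 * c - (x1 + y1)) * t) / (4 * c * m)"
      using cpos mpos by (simp add: field_simps)
    have q: "(2 * c * m * (2 * c + (x1 + y1)) - (2 * c - (x1 + y1)) * t) / (4 * c * m) > 0" using key cpos mpos by simp
    have "(x1 + y1) * measure N {..<t} + (2 * c) * measure N {t<..} > 0" using e0 i1 e1 q by linarith
    then show ?thesis unfolding c_def[symmetric] pay by simp
  qed
qed

end
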